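(* Let $A=(a_{pq})$ be an $m\times m$ coloring matrix. Suppose $I,J\subseteq\{1,\dots,m\}$ are disjoint sets with $|I|=|J|$ such that $\sum_{i\in I}t_A^{(i)}(n)=\sum_{j\in J}t_A^{(j)}(n)$ for all $n$, and that $\ell\in\{1,\dots,m\}$ is a color (possibly in $I$ or $J$) with $a_{\ell i}=0$ for all $i\in I$ and $a_{\ell j}=1$ for all $j\in J$. Let $B=(b_{pq})$ be the $m\times m$ coloring matrix defined by $b_{pq}=1$ if $p=\ell$ and $q\in I$, $b_{pq}=0$ if $p=\ell$ and $q\in J$, and $b_{pq}=a_{pq}$ otherwise. Then $A$ and $B$ are strictly tree coloring equivalent. Furthermore, for all $n\ge1$, $$\sum_{i\in I}t^{(i)}_A(n)=\sum_{j\in J}t^{(j)}_A(n)=\sum_{i\in I}t^{(i)}_{B}(n)=\sum_{j\in J}t^{(j)}_{B}(n).$$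
   Context: A plane tree is an unlabeled rooted tree in which the children of every vertex are linearly ordered. A coloring matrix is an $m\times m$ matrix $A=(a_{ij})$ with entries in $\{0,1\}$. An $A$-coloring of a plane tree assigns to each vertex a color in $\{1,\dots,m\}$ such that whenever a vertex of color $j$ is a child of a vertex of color $i$, $a_{ij}=1$. Let $t_A^{(i)}(n)$ be the number of pairs (plane tree with $n$ vertices, $A$-coloring of it) in which the root has color $i$. Two $m\times m$ coloring matrices $A,B$ are strictly tree coloring equivalent if $t_A^{(i)}(n)=t_B^{(i)}(n)$ for all $n\ge1$ and all $1\le i\le m$. *)

theory Defs
  imports Main
begin

text \<open>A plane tree is a unit-labelled tree; a pair (plane tree, coloring of it) is the same as a
  nat-labelled tree (its shape being the plane tree, the labels being the colors).\<close>
datatype 'a ltree = LNode 'a "'a ltree list"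

type_synonym plane_tree = "unit ltree"

fun root_label :: "'a ltree \<Rightarrow> 'a" where
  "root_label (LNode a ts) = a"

fun num_vertices :: "'a ltree \<Rightarrow> nat" where
  "num_vertices (LNode a ts) = Suc (sum_list (map num_vertices ts))"

fun shape :: "'a ltree \<Rightarrow> plane_tree" where
  "shape (LNode a ts) = LNode () (map shape ts)"

text \<open>A coloring matrix of size m is represented by a function A :: nat => nat => bool on
  indices 1..m, where A i j = True means a_ij = 1.  A colored tree is a valid A-coloring if all
  colors lie in {1..m} and whenever a child of color j has parent of color i, a_ij = 1.\<close>
fun valid_coloring :: "nat \<Rightarrow> (nat \<Rightarrow> nat \<Rightarrow> bool) \<Rightarrow> nat ltree \<Rightarrow> bool" where
  "valid_coloring m A (LNode c ts) \<longleftrightarrow>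
     c \<in> {1..m} \<and>
     (\<forall>t\<in>set ts. A c (root_label t) \<and> valid_coloring m A t)"

definition tcount :: "nat \<Rightarrow> (nat \<Rightarrow> nat \<Rightarrow> bool) \<Rightarrow> nat \<Rightarrow> nat \<Rightarrow> nat" where
  "tcount m A i n = card {T :: nat ltree. num_vertices T = n \<and> valid_coloring m A T \<and> root_label T = i}"

definition strictly_tree_coloring_equivalent ::
  "nat \<Rightarrow> (nat \<Rightarrow> nat \<Rightarrow> bool) \<Rightarrow> (nat \<Rightarrow> nat \<Rightarrow> bool) \<Rightarrow> bool" where
  "strictly_tree_coloring_equivalent m A B \<longleftrightarrow>
     (\<forall>n\<ge>1. \<forall>i\<in>{1..m}. tcount m A i n = tcount m B i n)"

end

theory Submission
  imports Defs
begin

definition rootset :: "nat \<Rightarrow> (nat \<Rightarrow> nat \<Rightarrow> bool) \<Rightarrow> nat set \<Rightarrow> nat \<Rightarrow> nat ltree set" where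
  "rootset m A R k = {T. num_vertices T = k \<and> valid_coloring m A T \<and> root_label T \<in> R}"

definition forest :: "nat \<Rightarrow> (nat \<Rightarrow> nat \<Rightarrow> bool) \<Rightarrow> nat set \<Rightarrow> nat \<Rightarrow> nat ltree list set" where
  "forest m A R s = {ts. sum_list (map num_vertices ts) = s \<and>
      (\<forall>t\<in>set ts. valid_coloring m A t \<and> root_label t \<in> R)}"

lemma nv_pos: "num_vertices t \<ge> 1"
  by (cases t) simp

lemma valid_root: "valid_coloring m A T \<Longrightarrow> root_label T \<in> {1..m}"
  by (cases T) simp

lemma tree_eq:
  "{T. num_vertices T = Suc s \<and> valid_coloring m A T \<and> root_label T = i} =
   (if i \<in> {1..m} then LNode i ` forest m A {j. A i j} s else {})"
proof (cases "i \<in> {1..m}")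
  case True
  have "{T. num_vertices T = Suc s \<and> valid_coloring m A T \<and> root_label T = i} \<subseteq> LNode i ` forest m A {j. A i j} s"
  proof
    fix T assume "T \<in> {T. num_vertices T = Suc s \<and> valid_coloring m A T \<and> root_label T = i}"
    then show "T \<in> LNode i ` forest m A {j. A i j} s"
      by (cases T) (auto simp: forest_def)
  qed
  moreover have "LNode i ` forest m A {j. A i j} s \<subseteq> {T. num_vertices T = Suc s \<and> valid_coloring m A T \<and> root_label T = i}"
    using True by (auto simp: forest_def)
  ultimately show ?thesis using True by auto
next
  case False
  then show ?thesis using valid_root by fastforce
qed

lemma empty0: "{T. num_vertices T = 0 \<and> P T} = {}"
  using nv_pos by (metis (mono_tags, lifting) empty_Collect_eq not_one_le_zero)

lemma forest0: "forest m A R 0 = {[]}"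
proof -
  have "ts = []" if "sum_list (map num_vertices ts) = 0" for ts :: "nat ltree list"
  proof (cases ts)
    case (Cons a list)
    then show ?thesis using that nv_pos[of a] by simp
  qed simp
  then show ?thesis by (auto simp: forest_def)
qed

lemma forestS:
  "forest m A R (Suc s) = (\<Union>k\<in>{1..Suc s}. (\<lambda>(t,ts). t#ts) ` (rootset m A R k \<times> forest m A R (Suc s - k)))"
proof
  show "forest m A R (Suc s) \<subseteq> (\<Union>k\<in>{1..Suc s}. (\<lambda>(t,ts). t#ts) ` (rootset m A R k \<times> forest m A R (Suc s - k)))"
  proof
    fix ts assume a: "ts \<in> forest m A R (Suc s)"
    then obtain t ts' where ts: "ts = t # ts'" by (cases ts) (auto simp: forest_def)
    let ?k = "num_vertices t"
    have "?k \<in> {1..Suc s}" using a ts nv_pos[of t] by (auto simp: forest_def)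
    moreover have "(t, ts') \<in> rootset m A R ?k \<times> forest m A R (Suc s - ?k)"
      using a ts by (auto simp: forest_def rootset_def)
    ultimately show "ts \<in> (\<Union>k\<in>{1..Suc s}. (\<lambda>(t,ts). t#ts) ` (rootset m A R k \<times> forest m A R (Suc s - k)))"
      using ts by force
  qed
next
  show "(\<Union>k\<in>{1..Suc s}. (\<lambda>(t,ts). t#ts) ` (rootset m A R k \<times> forest m A R (Suc s - k))) \<subseteq> forest m A R (Suc s)"
    by (auto simp: forest_def rootset_def)
qed

lemma fin: "finite (forest m A UNIV n) \<and> finite {T. num_vertices T = n \<and> valid_coloring m A T}"
proof (induction n rule: less_induct)
  case (less n)
  have T: "finite {T. num_vertices T = n \<and> valid_coloring m A T}"
  proof (cases n)
    case 0 then show ?thesis unfolding 0 empty0 by simp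
  next
    case (Suc s)
    have "{T. num_vertices T = n \<and> valid_coloring m A T} =
       (\<Union>i\<in>{1..m}. {T. num_vertices T = Suc s \<and> valid_coloring m A T \<and> root_label T = i})"
      using valid_root Suc by blast
    also have "\<dots> = (\<Union>i\<in>{1..m}. LNode i ` forest m A {j. A i j} s)"
      using tree_eq by simp
    finally have e: "{T. num_vertices T = n \<and> valid_coloring m A T} = (\<Union>i\<in>{1..m}. LNode i ` forest m A {j. A i j} s)" .
    have "finite (forest m A UNIV s)" using less.IH Suc by simp
    moreover have "forest m A {j. A i j} s \<subseteq> forest m A UNIV s" for i
      by (auto simp: forest_def)
    ultimately have "finite (forest m A {j. A i j} s)" for i using finite_subset by blast
    then show ?thesis unfolding e by blast
  qed
  have F: "finite (forest m A UNIV n)"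
  proof (cases n)
    case 0 then show ?thesis by (simp add: forest0)
  next
    case (Suc s)
    have "finite (rootset m A UNIV k)" if "k \<in> {1..Suc s}" for k
    proof -
      have "finite {T. num_vertices T = k \<and> valid_coloring m A T}"
        using that T less.IH Suc by (cases "k = n") auto
      moreover have "rootset m A UNIV k \<subseteq> {T. num_vertices T = k \<and> valid_coloring m A T}"
        by (auto simp: rootset_def)
      ultimately show ?thesis using finite_subset by blast
    qed
    moreover have "finite (forest m A UNIV (Suc s - k))" if "k \<in> {1..Suc s}" for k
      using that less.IH Suc by auto
    ultimately show ?thesis unfolding Suc forestS by blast
  qed
  show ?case using T F by blast
qed

lemma fin_forest: "finite (forest m A R n)"
proof -
  have "forest m A R n \<subseteq> forest m A UNIV n" by (auto simp: forest_def)
  then show ?thesis using fin finite_subset by blast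
qed

lemma fin_rootset: "finite (rootset m A R n)"
proof -
  have "rootset m A R n \<subseteq> {T. num_vertices T = n \<and> valid_coloring m A T}" by (auto simp: rootset_def)
  then show ?thesis using fin finite_subset by blast
qed

lemma card_forestS:
  "card (forest m A R (Suc s)) = (\<Sum>k=1..Suc s. card (rootset m A R k) * card (forest m A R (Suc s - k)))"
proof -
  have inj: "inj_on (\<lambda>(t,ts). t#ts) X" for X :: "(nat ltree \<times> nat ltree list) set"
    by (auto simp: inj_on_def)
  have "card (forest m A R (Suc s)) = (\<Sum>k=1..Suc s. card ((\<lambda>(t,ts). t#ts) ` (rootset m A R k \<times> forest m A R (Suc s - k))))"
    unfolding forestS
    apply (rule card_UN_disjoint)
    using fin_forest fin_rootset by (auto simp: rootset_def)
  also have "\<dots> = (\<Sum>k=1..Suc s. card (rootset m A R k) * card (forest m A R (Suc s - k)))"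
    by (simp add: card_image[OF inj] card_cartesian_product)
  finally show ?thesis .
qed

lemma card_rootset:
  "card (rootset m A R k) = (\<Sum>j\<in>R \<inter> {1..m}. tcount m A j k)"
proof -
  have e: "rootset m A R k = (\<Union>j\<in>R \<inter> {1..m}. {T. num_vertices T = k \<and> valid_coloring m A T \<and> root_label T = j})"
    using valid_root by (auto simp: rootset_def)
  have "finite {T. num_vertices T = k \<and> valid_coloring m A T \<and> root_label T = j}" for j
    using fin_rootset[of m A "{j}" k] by (simp add: rootset_def)
  then show ?thesis unfolding e tcount_def
    by (intro card_UN_disjoint) auto
qed

lemma forest_equal:
  "(\<forall>k\<in>{1..s}. card (rootset m A R k) = card (rootset m B R' k)) \<Longrightarrow>
   card (forest m A R s) = card (forest m B R' s)"
proof (induction s rule: less_induct)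
  case (less s)
  show ?case
  proof (cases s)
    case 0 then show ?thesis by (simp add: forest0)
  next
    case (Suc s')
    have "card (forest m A R (Suc s' - k)) = card (forest m B R' (Suc s' - k))" if "k \<in> {1..Suc s'}" for k
      using that less.prems Suc by (intro less.IH) auto
    then show ?thesis unfolding Suc card_forestS using less.prems Suc
      by (intro sum.cong) auto
  qed
qed

lemma tcount_Suc:
  "tcount m A i (Suc s) = (if i \<in> {1..m} then card (forest m A {j. A i j} s) else 0)"
  unfolding tcount_def tree_eq by (simp add: card_image inj_on_def)

lemma tcount_0: "tcount m A i 0 = 0"
proof -
  have e: "{T. num_vertices T = 0 \<and> valid_coloring m A T \<and> root_label T = i} = {}"
    by (rule empty0)
  show ?thesis unfolding tcount_def e by simp
qed

theorem theorem15:
  fixes m :: nat and A B :: "nat \<Rightarrow> nat \<Rightarrow> bool" and I J :: "nat set" and l :: nat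
  assumes "I \<subseteq> {1..m}" and "J \<subseteq> {1..m}" and "I \<inter> J = {}" and "card I = card J"
    and "\<forall>n. (\<Sum>i\<in>I. tcount m A i n) = (\<Sum>j\<in>J. tcount m A j n)"
    and "l \<in> {1..m}"
    and "\<forall>i\<in>I. \<not> A l i" and "\<forall>j\<in>J. A l j"
    and "\<forall>p q. B p q = (if p = l \<and> q \<in> I then True
                        else if p = l \<and> q \<in> J then False else A p q)"
  shows "strictly_tree_coloring_equivalent m A B \<and>
    (\<forall>n\<ge>1. (\<Sum>i\<in>I. tcount m A i n) = (\<Sum>j\<in>J. tcount m A j n) \<and>
            (\<Sum>j\<in>J. tcount m A j n) = (\<Sum>i\<in>I. tcount m B i n) \<and>
            (\<Sum>i\<in>I. tcount m B i n) = (\<Sum>j\<in>J. tcount m B j n))"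
proof -
  have eq: "tcount m A i n = tcount m B i n" for i n
  proof (induction n arbitrary: i rule: less_induct)
    case (less n)
    show ?case
    proof (cases n)
      case 0 then show ?thesis by (simp add: tcount_0)
    next
      case (Suc s)
      show ?thesis
      proof (cases "i \<in> {1..m}")
        case False then show ?thesis unfolding Suc tcount_Suc if_not_P[OF False] by simp
      next
        case True
        have "card (rootset m A {j. A i j} k) = card (rootset m B {j. B i j} k)" if "k \<in> {1..s}" for k
        proof -
          have ih: "(\<Sum>j\<in>{j. B i j} \<inter> {1..m}. tcount m B j k) = (\<Sum>j\<in>{j. B i j} \<inter> {1..m}. tcount m A j k)"
            using that Suc less.IH by (intro sum.cong) auto
          have "(\<Sum>j\<in>{j. A i j} \<inter> {1..m}. tcount m A j k) = (\<Sum>j\<in>{j. B i j} \<inter> {1..m}. tcount m A j k)"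
          proof (cases "i = l")
            case False
            then have "{j. B i j} = {j. A i j}" using assms(9) by auto
            then show ?thesis by simp
          next
            case il: True
            define R0 where "R0 = {j. A l j} \<inter> {1..m}"
            have set: "{j. B i j} \<inter> {1..m} = (R0 - J) \<union> I"
              using assms(1,3,7,9) il unfolding R0_def by auto
            have JR: "J \<subseteq> R0" using assms(2,8) unfolding R0_def by auto
            have d: "(R0 - J) \<inter> I = {}" using assms(7) unfolding R0_def by auto
            have fI: "finite I" using assms(1) finite_subset by blast
            have fR: "finite R0" unfolding R0_def by simp
            have "(\<Sum>j\<in>(R0 - J) \<union> I. tcount m A j k) = (\<Sum>j\<in>R0 - J. tcount m A j k) + (\<Sum>j\<in>I. tcount m A j k)"
              using d fI fR by (intro sum.union_disjoint) auto
            also have "\<dots> = (\<Sum>j\<in>R0 - J. tcount m A j k) + (\<Sum>j\<in>J. tcount m A j k)"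
              using assms(5) by simp
            also have "\<dots> = (\<Sum>j\<in>R0. tcount m A j k)"
              by (rule sum.subset_diff[OF JR fR, symmetric])
            finally show ?thesis using set il unfolding R0_def by simp
          qed
          then show ?thesis unfolding card_rootset using ih by simp
        qed
        then have "card (forest m A {j. A i j} s) = card (forest m B {j. B i j} s)"
          by (intro forest_equal) blast
        then show ?thesis unfolding Suc tcount_Suc using True by simp
      qed
    qed
  qed
  show ?thesis
    unfolding strictly_tree_coloring_equivalent_def using eq assms(5) by simp
qed

end
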